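(* Let $n\geq 2$, $\mathfrak g=\mathfrak{sl}(n+1,\mathbb R)$ with the $|1|$-grading $\mathfrak g=\mathfrak g_{-1}\oplus\mathfrak g_0\oplus\mathfrak g_1$ described below, and let $0\neq Z\in\mathfrak g_1$. Then $$0=C(Z)\subset F(Z)=\{X\in\mathfrak g_{-1}: ZX=0\},\qquad T(Z)=\{X\in\mathfrak g_{-1}: ZX=1\}.$$ Moreover, for every $X\in T(Z)$ the element $A=[Z,X]\in\mathfrak g_0$ acts diagonalizably on $\mathfrak g_{-1}$ and on $\mathbb W$, and: (1) for each $X\in T(Z)$ all eigenvalues of $A$ on $\mathfrak g_{-1}$ are non-positive and the $0$-eigenspace of $A$ on $\mathfrak g_{-1}$ coincides with $C(Z)$; (2) for each $X\in T(Z)$, $\mathbb W_{ss}(A)=0$; (3) $\bigcap_{X\in T(Z)}\mathbb W_{st}(A)=0$.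
   Context: Write elements of $\mathfrak{sl}(n+1,\mathbb R)$ in block form with blocks of sizes $1$ and $n$ as $\begin{pmatrix}-\mathrm{tr}(A) & Z\\ X & A\end{pmatrix}$ with $X\in\mathbb R^n$ (column), $A\in\mathfrak{gl}(n,\mathbb R)$, $Z\in\mathbb R^{n*}$ (row). The grading components $\mathfrak g_{-1},\mathfrak g_0,\mathfrak g_1$ are the parts given by $X$, $A$ and $Z$ respectively, and the bracket is the matrix commutator; for $Z\in\mathfrak g_1$, $X\in\mathfrak g_{-1}$, $ZX$ denotes the real number given by the matrix product. For $Z\in\mathfrak g_1$ define $C(Z)=\{X\in\mathfrak g_{-1}:[X,Z]=0\}$, $F(Z)=\{X\in\mathfrak g_{-1}:[X,[X,Z]]=0\}$, and $T(Z)=\{X\in\mathfrak g_{-1}:[[Z,X],X]=-2X,\ [[Z,X],Z]=2Z\}$. The group $G_0\cong GL(n,\mathbb R)$ acts on $\mathfrak g_{\pm1}$ by the adjoint action. $\mathbb W$ denotes the representation of $\mathfrak g_0$ in which the harmonic curvature of projective structures takes values: for $n>2$ it is the subrepresentation of $\Lambda^2\mathfrak g_1\otimes\mathfrak{sl}(\mathfrak g_{-1})$ of projective Weyl curvature tensors (totally trace-free curvature-type tensors); for $n=2$ it is the subrepresentation of $\Lambda^2\mathfrak g_1\otimes\mathfrak g_1$ in which the projective Cotton–York tensor takes values. For $A\in\mathfrak g_0$ acting diagonalizably on a representation $\mathbb W$, $\mathbb W_{ss}(A)$ (resp. $\mathbb W_{st}(A)$) is the sum of eigenspaces of $A$ with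 negative (resp. non-positive) eigenvalues. *)

theory Defs
  imports "HOL-Analysis.Analysis"
begin

text \<open>The Lie algebra sl(n+1,R) realised as trace-free matrices indexed by the type
  'n option, where None is the index of the 1-block and Some a (a :: 'n) run
  through the n-block.  Elements of g_{-1} are columns X :: real^'n, elements of g_1
  are rows Z :: real^'n, elements of g_0 are A :: real^'n^'n.\<close>

definition blk :: "real^'n \<Rightarrow> real^'n^'n \<Rightarrow> real^'n \<Rightarrow> real^('n::finite option)^('n option)" where
  "blk X A Z = (\<chi> i j. case i of
       None \<Rightarrow> (case j of None \<Rightarrow> - trace A | Some b \<Rightarrow> Z $ b)
     | Some a \<Rightarrow> (case j of None \<Rightarrow> X $ a | Some b \<Rightarrow> A $ a $ b))"

definition gm1 :: "real^'n \<Rightarrow> real^('n::finite option)^('n option)" where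
  "gm1 X = blk X 0 0"

definition g1 :: "real^'n \<Rightarrow> real^('n::finite option)^('n option)" where
  "g1 Z = blk 0 0 Z"

definition brk :: "real^'m^'m \<Rightarrow> real^'m^'m \<Rightarrow> real^'m::finite^'m" where
  "brk M N = M ** N - N ** M"

text \<open>ZX: the real number given by the matrix product of the row Z and the column X.\<close>
definition pair :: "real^'n \<Rightarrow> real^'n::finite \<Rightarrow> real" where
  "pair Z X = (\<Sum>i\<in>UNIV. Z $ i * X $ i)"

definition Cset :: "real^'n \<Rightarrow> (real^'n::finite) set" where
  "Cset Z = {X. brk (gm1 X) (g1 Z) = 0}"

definition Fset :: "real^'n \<Rightarrow> (real^'n::finite) set" where
  "Fset Z = {X. brk (gm1 X) (brk (gm1 X) (g1 Z)) = 0}"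

definition Tset :: "real^'n \<Rightarrow> (real^'n::finite) set" where
  "Tset Z = {X. brk (brk (g1 Z) (gm1 X)) (gm1 X) = - 2 *\<^sub>R gm1 X
              \<and> brk (brk (g1 Z) (gm1 X)) (g1 Z) = 2 *\<^sub>R g1 Z}"

definition minus1_part :: "real^('n::finite option)^('n option) \<Rightarrow> real^'n" where
  "minus1_part M = (\<chi> a. M $ Some a $ None)"

definition ad_m1 :: "real^('n::finite option)^('n option) \<Rightarrow> real^'n \<Rightarrow> real^'n" where
  "ad_m1 M Y = minus1_part (brk M (gm1 Y))"

definition ad_m1_mat :: "real^('n::finite option)^('n option) \<Rightarrow> real^'n^'n" where
  "ad_m1_mat M = (\<chi> k m. ad_m1 M (axis m 1) $ k)"

text \<open>Elements of Lambda^2 g_1 (x) gl(g_{-1}) are identified (via the invariant pairing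
  g_1 = g_{-1}^* given by ZX) with component arrays R$i$j$k$l = R_{ij}^k_l, i.e. the k-th
  component of R(e_i,e_j)(e_l).  Induced g_0 action, with B the matrix of ad on g_{-1}.\<close>
definition act_weyl :: "real^'n^'n \<Rightarrow> real^'n^'n^'n^'n \<Rightarrow> real^'n^'n^'n^('n::finite)" where
  "act_weyl B R = (\<chi> i j k l.
       (\<Sum>m\<in>UNIV. B$k$m * R$i$j$m$l) - (\<Sum>m\<in>UNIV. B$m$i * R$m$j$k$l)
     - (\<Sum>m\<in>UNIV. B$m$j * R$i$m$k$l) - (\<Sum>m\<in>UNIV. B$m$l * R$i$j$k$m))"

text \<open>Projective Weyl curvature tensors: skew in i j, algebraic Bianchi identity,
  totally trace-free (values in sl(g_{-1}); Ricci-type contraction vanishes).\<close>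
definition Weyl_space :: "(real^'n^'n^'n^('n::finite)) set" where
  "Weyl_space = {R. (\<forall>i j k l. R$i$j$k$l = - R$j$i$k$l)
      \<and> (\<forall>i j k l. R$i$j$k$l + R$j$l$k$i + R$l$i$k$j = 0)
      \<and> (\<forall>i j. (\<Sum>k\<in>UNIV. R$i$j$k$k) = 0)
      \<and> (\<forall>j l. (\<Sum>k\<in>UNIV. R$k$j$k$l) = 0)
      \<and> (\<forall>i l. (\<Sum>k\<in>UNIV. R$i$k$k$l) = 0)}"

text \<open>Elements of Lambda^2 g_1 (x) g_1 as arrays C$i$j$l = C_{ijl}, skew in i j;
  Cotton-York type tensors also satisfy the cyclic identity (automatic for n = 2).\<close>
definition act_cotton :: "real^'n^'n \<Rightarrow> real^'n^'n^'n \<Rightarrow> real^'n^'n^('n::finite)" where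
  "act_cotton B C = (\<chi> i j l.
       - (\<Sum>m\<in>UNIV. B$m$i * C$m$j$l) - (\<Sum>m\<in>UNIV. B$m$j * C$i$m$l)
       - (\<Sum>m\<in>UNIV. B$m$l * C$i$j$m))"

definition Cotton_space :: "(real^'n^'n^('n::finite)) set" where
  "Cotton_space = {C. (\<forall>i j l. C$i$j$l = - C$j$i$l)
      \<and> (\<forall>i j l. C$i$j$l + C$j$l$i + C$l$i$j = 0)}"

definition diagonalizable_on :: "'v::real_vector set \<Rightarrow> ('v \<Rightarrow> 'v) \<Rightarrow> bool" where
  "diagonalizable_on S f \<longleftrightarrow> S \<subseteq> span {v\<in>S. \<exists>c. f v = c *\<^sub>R v}"

definition W_ss :: "'v::real_vector set \<Rightarrow> ('v \<Rightarrow> 'v) \<Rightarrow> 'v set" where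
  "W_ss S f = span {v\<in>S. \<exists>c<0. f v = c *\<^sub>R v}"

definition W_st :: "'v::real_vector set \<Rightarrow> ('v \<Rightarrow> 'v) \<Rightarrow> 'v set" where
  "W_st S f = span {v\<in>S. \<exists>c\<le>0. f v = c *\<^sub>R v}"

end

theory Submission
  imports Defs
begin


fun polyop :: "real list \<Rightarrow> ('v::real_vector \<Rightarrow> 'v) \<Rightarrow> 'v \<Rightarrow> 'v" where
  "polyop [] f v = v"
| "polyop (m#L) f v = f (polyop L f v) - m *\<^sub>R polyop L f v"

lemma polyop_linear: "linear f \<Longrightarrow> linear (polyop L f)"
proof (induction L)
  case Nil then show ?case by (simp add: linear_id[unfolded id_def])
next
  case (Cons m L)
  then show ?case
    by (auto intro!: linearI simp: linear_add linear_scale algebra_simps)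
qed

lemma polyop_comm_f: "linear f \<Longrightarrow> polyop L f (f v) = f (polyop L f v)"
  by (induction L) (auto simp: linear_diff linear_scale)

lemma polyop_eigen: "linear f \<Longrightarrow> f u = c *\<^sub>R u \<Longrightarrow> polyop L f u = (\<Prod>m\<leftarrow>L. c - m) *\<^sub>R u"
  by (induction L) (auto simp: linear_scale algebra_simps)

lemma polyop_subspace: "subspace S \<Longrightarrow> (\<And>v. v \<in> S \<Longrightarrow> f v \<in> S) \<Longrightarrow> v \<in> S \<Longrightarrow> polyop L f v \<in> S"
  by (induction L) (auto intro!: subspace_diff subspace_scale)

lemma polyop_diag:
  assumes "distinct L" "linear f" "subspace S" "\<And>v. v \<in> S \<Longrightarrow> f v \<in> S"
  shows "v \<in> S \<Longrightarrow> polyop L f v = 0 \<Longrightarrow> v \<in> span {v\<in>S. \<exists>c. f v = c *\<^sub>R v}"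
  using assms(1)
proof (induction L arbitrary: v)
  case Nil then show ?case by (simp add: span_zero)
next
  case (Cons m L)
  define u where "u = polyop L f v"
  have uS: "u \<in> S" unfolding u_def using polyop_subspace[OF assms(3,4) Cons.prems(1)] .
  have ue: "f u = m *\<^sub>R u" using Cons.prems(2) by (simp add: u_def)
  define P where "P = (\<Prod>x\<leftarrow>L. m - x)"
  have "P \<noteq> 0" using Cons.prems(3) unfolding P_def
    by (auto simp: prod_list_zero_iff)
  define w where "w = v - (1/P) *\<^sub>R u"
  have lin: "linear (polyop L f)" using polyop_linear[OF assms(2)] .
  have "polyop L f w = u - (1/P) *\<^sub>R (P *\<^sub>R u)"
    unfolding w_def using polyop_eigen[OF assms(2) ue, of L]
    by (simp add: linear_diff[OF lin] linear_scale[OF lin] u_def P_def)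
  then have "polyop L f w = 0" using \<open>P \<noteq> 0\<close> by simp
  moreover have "w \<in> S" unfolding w_def using Cons.prems(1) uS assms(3)
    by (simp add: subspace_diff subspace_scale)
  ultimately have "w \<in> span {v\<in>S. \<exists>c. f v = c *\<^sub>R v}" using Cons by auto
  moreover have "u \<in> span {v\<in>S. \<exists>c. f v = c *\<^sub>R v}" using uS ue by (intro span_base) auto
  ultimately have "w + (1/P) *\<^sub>R u \<in> span {v\<in>S. \<exists>c. f v = c *\<^sub>R v}"
    by (intro span_add span_mul) auto
  then show ?case by (simp add: w_def)
qed

lemma polyop_noeig:
  assumes "linear f" "\<And>v. polyop L f v = 0" "f v = c *\<^sub>R v" "c \<notin> set L"
  shows "v = 0"
proof -
  have "(\<Prod>m\<leftarrow>L. c - m) *\<^sub>R v = 0" using polyop_eigen[OF assms(1,3), of L] assms(2) by simp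
  moreover have "(\<Prod>m\<leftarrow>L. c - m) \<noteq> 0" using assms(4) by (auto simp: prod_list_zero_iff)
  ultimately show ?thesis by simp
qed

lemma polyop_shift: "polyop L (\<lambda>v. a v + v) v = polyop (map (\<lambda>m. m - 1) L) a v"
  by (induction L) (auto simp: algebra_simps)

lemma polyop_app: "polyop (xs @ ys) a v = polyop xs a (polyop ys a v)"
  by (induction xs) auto

lemma polyop_snoc: "linear a \<Longrightarrow> polyop (L @ [m]) a v = polyop (m # L) a v"
  using polyop_linear[of a L] polyop_comm_f[of a L v]
  by (simp add: polyop_app linear_diff linear_scale)

lemma polyop_front: "linear a \<Longrightarrow> polyop L a v = 0 \<Longrightarrow> polyop (m#L) a v = 0"
  by (simp add: linear_0)

lemma polyop_comm_e: "linear e \<Longrightarrow> (\<And>v. e (g v) = g (e v)) \<Longrightarrow> e (polyop L g v) = polyop L g (e v)"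
  by (induction L) (auto simp: linear_diff linear_scale)

lemma polyop_split:
  assumes la: "linear a" and le: "linear e" and idem: "\<And>v. e (e v) = e v"
    and comm: "\<And>v. e (a v) = a (e v)"
  shows "polyop L (\<lambda>v. a v + e v) v = polyop L (\<lambda>v. a v + v) (e v) + polyop L a (v - e v)"
proof (induction L)
  case Nil then show ?case by simp
next
  case (Cons m L)
  have c1: "e (polyop L (\<lambda>v. a v + v) x) = polyop L (\<lambda>v. a v + v) (e x)" for x
    by (rule polyop_comm_e[OF le]) (simp add: linear_add[OF le] comm)
  have c0: "e (polyop L a x) = polyop L a (e x)" for x
    by (rule polyop_comm_e[OF le]) (simp add: comm)
  have l0: "linear (polyop L a)" by (rule polyop_linear[OF la])
  have z: "e (polyop L a (v - e v)) = 0"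
    by (simp add: c0 linear_diff[OF le] idem linear_0[OF l0])
  show ?case
    apply (simp only: polyop.simps Cons linear_add[OF la] linear_add[OF le] c1 idem z)
    apply (simp add: algebra_simps)
    done
qed

lemma polyop_step:
  assumes la: "linear a" and le: "linear e" and idem: "\<And>v. e (e v) = e v"
    and comm: "\<And>v. e (a v) = a (e v)"
    and z: "\<And>v. polyop L a v = 0"
    and m: "map (\<lambda>x. x - 1) (c#L) = L @ [d]"
  shows "polyop (c#L) (\<lambda>v. a v + e v) v = 0"
proof -
  have "polyop (c#L) (\<lambda>v. a v + v) (e v) = polyop (L @ [d]) a (e v)"
    by (simp only: polyop_shift m)
  also have "\<dots> = 0" using polyop_snoc[OF la] polyop_front[OF la z] by simp
  finally show ?thesis
    using polyop_split[OF la le idem comm, of "c#L" v] polyop_front[OF la z] by simp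
qed




lemma sum_option: "(\<Sum>k\<in>(UNIV::'a::finite option set). f k) = f None + (\<Sum>a\<in>UNIV. f (Some a))"
  by (simp add: UNIV_option_conv sum.reindex)

lemma blk_simps:
  "blk X A Z $ None $ None = - trace A"
  "blk X A Z $ None $ Some b = Z $ b"
  "blk X A Z $ Some a $ None = X $ a"
  "blk X A Z $ Some a $ Some b = A $ a $ b"
  by (simp_all add: blk_def)

lemma trace0: "trace (0::real^'n::finite^'n) = 0"
  by (simp add: trace_def)

lemma gsimps:
  "gm1 X $ None $ j = 0" "gm1 X $ Some a $ None = X $ a" "gm1 X $ Some a $ Some b = 0"
  "g1 Z $ i $ None = 0" "g1 Z $ None $ Some b = Z $ b" "g1 Z $ Some a $ k = 0"
  by (cases j; cases i; cases k; simp add: gm1_def g1_def blk_simps trace0)+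

lemma N_simps:
  fixes Z X :: "real^'n::finite"
  shows
  "brk (g1 Z) (gm1 X) $ None $ None = pair Z X"
  "brk (g1 Z) (gm1 X) $ None $ Some b = 0"
  "brk (g1 Z) (gm1 X) $ Some a $ None = 0"
  "brk (g1 Z) (gm1 X) $ Some a $ Some b = - (X$a * Z$b)"
  by (simp_all add: brk_def matrix_matrix_mult_def sum_option gsimps pair_def)

lemma brk_anti: "brk M N = - brk N M"
  by (simp add: brk_def)

lemma NG_simps:
  fixes Z X Y :: "real^'n::finite"
  shows
  "brk (brk (g1 Z) (gm1 X)) (gm1 Y) $ None $ j = 0"
  "brk (brk (g1 Z) (gm1 X)) (gm1 Y) $ Some a $ Some b = 0"
  "brk (brk (g1 Z) (gm1 X)) (gm1 Y) $ Some a $ None = - (pair Z Y * X$a) - pair Z X * Y$a"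
  apply (cases j)
  apply (simp_all add: brk_def[of "brk _ _"] matrix_matrix_mult_def sum_option gsimps N_simps)
  apply (simp add: pair_def sum_distrib_left sum_distrib_right mult_ac)
  apply (simp add: sum_negf)
  done

lemma NZ_simps:
  fixes Z X :: "real^'n::finite"
  shows
  "brk (brk (g1 Z) (gm1 X)) (g1 Z) $ None $ None = 0"
  "brk (brk (g1 Z) (gm1 X)) (g1 Z) $ Some a $ j = 0"
  "brk (brk (g1 Z) (gm1 X)) (g1 Z) $ None $ Some b = 2 * pair Z X * Z$b"
  apply (cases j)
  apply (simp_all add: brk_def[of "brk _ _"] matrix_matrix_mult_def sum_option gsimps N_simps)
  apply (simp add: pair_def sum_distrib_left sum_distrib_right mult_ac)
  apply (simp add: sum_negf)
  done

lemma ad_m1_N: "ad_m1 (brk (g1 Z) (gm1 X)) Y = - (pair Z Y) *\<^sub>R X - pair Z X *\<^sub>R Y"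
  by (simp add: ad_m1_def minus1_part_def NG_simps vec_eq_iff)

lemma pair_axis: "pair Z (axis m 1) = Z $ m"
  by (simp add: pair_def axis_def if_distrib[of "\<lambda>x. _ * x"] cong: if_cong)

lemma ad_m1_mat_N: "ad_m1_mat (brk (g1 Z) (gm1 X)) $ k $ m = - (Z$m * X$k) - pair Z X * (if k = m then 1 else 0)"
  by (simp add: ad_m1_mat_def ad_m1_N pair_axis) (simp add: axis_def)

lemma Cset_eq:
  fixes Z :: "real^'n::finite"
  assumes "Z \<noteq> 0" shows "Cset Z = {0}"
proof -
  obtain b where b: "Z $ b \<noteq> 0" using assms by (auto simp: vec_eq_iff)
  have "X = 0" if "brk (gm1 X) (g1 Z) = 0" for X
  proof -
    have "brk (g1 Z) (gm1 X) = 0" using that brk_anti[of "gm1 X" "g1 Z"] by simp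
    then have "\<forall>a. X$a * Z$b = 0" using N_simps(4)[of Z X _ b] by (metis neg_equal_0_iff_equal zero_index)
    then show ?thesis using b by (simp add: vec_eq_iff)
  qed
  moreover have "brk (gm1 0) (g1 Z) = 0"
    using brk_anti[of "gm1 0" "g1 Z"] N_simps[of Z 0]
    by (simp add: vec_eq_iff pair_def) (metis option.exhaust)
  ultimately show ?thesis unfolding Cset_def by auto
qed

lemma all_opt: "(\<forall>i. P i) \<longleftrightarrow> P None \<and> (\<forall>a. P (Some a))"
  by (metis option.exhaust)

lemma mat_eq_opt: "(M::real^('n::finite option)^('n option)) = M' \<longleftrightarrow>
   M$None$None = M'$None$None \<and> (\<forall>b. M$None$Some b = M'$None$Some b)
 \<and> (\<forall>a. M$Some a$None = M'$Some a$None) \<and> (\<forall>a b. M$Some a$Some b = M'$Some a$Some b)"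
  by (simp add: vec_eq_iff all_opt[where P="\<lambda>i. \<forall>j. _ i j"] all_opt[where P="\<lambda>j. _ j"]) blast

lemma Fset_eq:
  fixes Z :: "real^'n::finite"
  shows "Fset Z = {X. pair Z X = 0}"
proof -
  have e: "brk (gm1 X) (brk (gm1 X) (g1 Z)) = brk (brk (g1 Z) (gm1 X)) (gm1 X)" for X
    by (simp add: brk_def matrix_matrix_mult_def vec_eq_iff sum_subtractf algebra_simps)
  have "X \<in> Fset Z \<longleftrightarrow> (\<forall>a. pair Z X * X $ a = 0)" for X
    unfolding Fset_def by (simp add: e mat_eq_opt NG_simps)
  moreover have "pair Z X * X $ a = 0" if "pair Z X = 0" for X a using that by simp
  moreover have "pair Z X = 0" if "\<forall>a. pair Z X * X $ a = 0" for X
  proof (rule ccontr)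
    assume "pair Z X \<noteq> 0"
    then have "X = 0" using that by (simp add: vec_eq_iff)
    then show False using \<open>pair Z X \<noteq> 0\<close> by (simp add: pair_def)
  qed
  ultimately show ?thesis by blast
qed

lemma Tset_eq:
  fixes Z :: "real^'n::finite"
  assumes "Z \<noteq> 0"
  shows "Tset Z = {X. pair Z X = 1}"
proof -
  obtain b where b: "Z $ b \<noteq> 0" using assms by (auto simp: vec_eq_iff)
  have "X \<in> Tset Z \<longleftrightarrow> (\<forall>a. pair Z X * X $ a = X $ a) \<and> (\<forall>b. pair Z X * Z $ b = Z $ b)" for X
    unfolding Tset_def by (simp add: mat_eq_opt NG_simps NZ_simps gsimps)
  moreover have "pair Z X = 1" if "\<forall>b. pair Z X * Z $ b = Z $ b" for X
    using that b by (metis mult_cancel_right2)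
  ultimately show ?thesis by auto
qed

lemma pair_add: "pair Z (x + y) = pair Z x + pair Z y"
  by (simp add: pair_def algebra_simps sum.distrib)
lemma pair_scale: "pair Z (c *\<^sub>R x) = c * pair Z x"
  by (simp add: pair_def algebra_simps sum_distrib_left)
lemma pair_diff: "pair Z (x - y) = pair Z x - pair Z y"
  by (simp add: pair_def algebra_simps sum_subtractf)

lemma ad_lin: "linear (ad_m1 (brk (g1 Z) (gm1 X)))"
  by (rule linearI) (simp_all add: ad_m1_N pair_add pair_scale algebra_simps)

lemma ad_poly:
  assumes "pair Z X = 1"
  shows "polyop [-1,-2] (ad_m1 (brk (g1 Z) (gm1 X))) Y = 0"
  using assms by (simp add: ad_m1_N pair_add pair_scale pair_diff algebra_simps)

lemma ad_part:
  fixes Z :: "real^'n::finite"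
  assumes Z0: "Z \<noteq> 0" and X: "pair Z X = 1"
  shows "diagonalizable_on UNIV (ad_m1 (brk (g1 Z) (gm1 X)))
        \<and> (\<forall>c v. v \<noteq> 0 \<and> ad_m1 (brk (g1 Z) (gm1 X)) v = c *\<^sub>R v \<longrightarrow> c \<le> 0)
        \<and> {v. ad_m1 (brk (g1 Z) (gm1 X)) v = 0} = Cset Z"
proof (intro conjI allI impI)
  let ?f = "ad_m1 (brk (g1 Z) (gm1 X))"
  show "diagonalizable_on UNIV ?f"
    unfolding diagonalizable_on_def
    using polyop_diag[of "[-1,-2]" ?f UNIV] ad_lin ad_poly[OF X] by auto
  fix c v assume "v \<noteq> 0 \<and> ?f v = c *\<^sub>R v"
  then have "c \<in> set [-1,-2]" using polyop_noeig[of ?f "[-1,-2]" v c] ad_lin ad_poly[OF X] by blast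
  then show "c \<le> 0" by auto
next
  let ?f = "ad_m1 (brk (g1 Z) (gm1 X))"
  have "v = 0" if "?f v = 0" for v
    using polyop_noeig[of ?f "[-1,-2]" v 0] ad_lin ad_poly[OF X] that by auto
  moreover have "?f 0 = 0" by (simp add: ad_m1_N pair_def)
  ultimately show "{v. ?f v = 0} = Cset Z" using Cset_eq[OF Z0] by auto
qed




definition Bm :: "real^'n \<Rightarrow> real^'n \<Rightarrow> real^'n^('n::finite)" where
  "Bm X Z = (\<chi> k m. - (Z$m * X$k) - (if k = m then 1 else 0))"

lemma ad_mat_Bm: "pair Z X = 1 \<Longrightarrow> ad_m1_mat (brk (g1 Z) (gm1 X)) = Bm X Z"
  by (simp add: vec_eq_iff ad_m1_mat_N Bm_def)

definition w1 :: "real^'n \<Rightarrow> real^'n \<Rightarrow> real^'n^'n^'n^('n::finite) \<Rightarrow> real^'n^'n^'n^'n" where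
  "w1 X Z R = (\<chi> i j k l. Z$i * (\<Sum>m\<in>UNIV. X$m * R$m$j$k$l))"
definition w2 :: "real^'n \<Rightarrow> real^'n \<Rightarrow> real^'n^'n^'n^('n::finite) \<Rightarrow> real^'n^'n^'n^'n" where
  "w2 X Z R = (\<chi> i j k l. Z$j * (\<Sum>m\<in>UNIV. X$m * R$i$m$k$l))"
definition w3 :: "real^'n \<Rightarrow> real^'n \<Rightarrow> real^'n^'n^'n^('n::finite) \<Rightarrow> real^'n^'n^'n^'n" where
  "w3 X Z R = (\<chi> i j k l. Z$l * (\<Sum>m\<in>UNIV. X$m * R$i$j$k$m))"
definition w4 :: "real^'n \<Rightarrow> real^'n \<Rightarrow> real^'n^'n^'n^('n::finite) \<Rightarrow> real^'n^'n^'n^'n" where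
  "w4 X Z R = (\<chi> i j k l. R$i$j$k$l - X$k * (\<Sum>m\<in>UNIV. Z$m * R$i$j$m$l))"

lemma act_weyl_Bm: "act_weyl (Bm X Z) R = R + w1 X Z R + w2 X Z R + w3 X Z R + w4 X Z R"
  by (simp add: vec_eq_iff act_weyl_def Bm_def w1_def w2_def w3_def w4_def algebra_simps
      sum_subtractf sum.distrib sum_distrib_left sum_negf if_distrib[of "\<lambda>x. x * _"] cong: if_cong)

lemma px: "(\<Sum>m\<in>UNIV. X$m * (Z$m * S)) = pair Z X * S"
  by (simp add: pair_def sum_distrib_right) (simp add: mult_ac)
lemma pz: "(\<Sum>m\<in>UNIV. Z$m * (X$m * S)) = pair Z X * S"
  by (simp add: pair_def sum_distrib_right) (simp add: mult_ac)

lemma pair_sym: "pair X Z = pair Z X" by (simp add: pair_def mult_ac)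

lemmas wdefs = w1_def w2_def w3_def w4_def

lemma w_lin: "linear (w1 X Z)" "linear (w2 X Z)" "linear (w3 X Z)" "linear (w4 X Z)"
  by (rule linearI; simp add: vec_eq_iff wdefs algebra_simps sum.distrib sum_distrib_left)+

lemma w_idem: assumes "pair Z X = 1"
  shows "w1 X Z (w1 X Z R) = w1 X Z R" "w2 X Z (w2 X Z R) = w2 X Z R"
    "w3 X Z (w3 X Z R) = w3 X Z R" "w4 X Z (w4 X Z R) = w4 X Z R"
  using assms by (simp_all add: vec_eq_iff wdefs px pz right_diff_distrib sum_subtractf pair_sym[of X Z])

lemma w12: "w1 X Z (w2 X Z R) = w2 X Z (w1 X Z R)"
  apply (simp add: vec_eq_iff wdefs sum_distrib_left)
  apply (subst sum.swap) apply (simp add: mult_ac)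
  done
lemma w13: "w1 X Z (w3 X Z R) = w3 X Z (w1 X Z R)"
  apply (simp add: vec_eq_iff wdefs sum_distrib_left)
  apply (subst sum.swap) apply (simp add: mult_ac)
  done
lemma w23: "w2 X Z (w3 X Z R) = w3 X Z (w2 X Z R)"
  apply (simp add: vec_eq_iff wdefs sum_distrib_left)
  apply (subst sum.swap) apply (simp add: mult_ac)
  done
lemma w14: "w4 X Z (w1 X Z R) = w1 X Z (w4 X Z R)"
  apply (simp add: vec_eq_iff wdefs sum_distrib_left right_diff_distrib sum_subtractf)
  apply (subst sum.swap) apply (simp add: mult_ac)
  done
lemma w24: "w4 X Z (w2 X Z R) = w2 X Z (w4 X Z R)"
  apply (simp add: vec_eq_iff wdefs sum_distrib_left right_diff_distrib sum_subtractf)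
  apply (subst sum.swap) apply (simp add: mult_ac)
  done
lemma w34: "w4 X Z (w3 X Z R) = w3 X Z (w4 X Z R)"
  apply (simp add: vec_eq_iff wdefs sum_distrib_left right_diff_distrib sum_subtractf)
  apply (subst sum.swap) apply (simp add: mult_ac)
  done

lemma lin_id: "linear (\<lambda>v::'a::real_vector. v)"
  by (rule linearI) auto

lemma weyl_poly:
  assumes p: "pair Z X = 1"
  shows "polyop [5,4,3,2,1] (act_weyl (Bm X Z)) R = 0"
proof -
  note L = w_lin[of X Z] and I = w_idem[OF p]
  have l1: "linear (\<lambda>v. v + w1 X Z v)" by (rule linear_compose_add[OF lin_id L(1)])
  have l2: "linear (\<lambda>v. v + w1 X Z v + w2 X Z v)" by (rule linear_compose_add[OF l1 L(2)])
  have l3: "linear (\<lambda>v. v + w1 X Z v + w2 X Z v + w3 X Z v)" by (rule linear_compose_add[OF l2 L(3)])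
  have z0: "\<And>v. polyop [1] (\<lambda>v. v) v = 0" by simp
  have z1: "\<And>v. polyop [2,1] (\<lambda>v. v + w1 X Z v) v = 0"
    by (rule polyop_step[OF lin_id L(1) I(1) _ z0]) auto
  have z2: "\<And>v. polyop [3,2,1] (\<lambda>v. v + w1 X Z v + w2 X Z v) v = 0"
    by (rule polyop_step[OF l1 L(2) I(2) _ z1]) (auto simp: linear_add[OF L(2)] w12)
  have z3: "\<And>v. polyop [4,3,2,1] (\<lambda>v. v + w1 X Z v + w2 X Z v + w3 X Z v) v = 0"
    by (rule polyop_step[OF l2 L(3) I(3) _ z2]) (auto simp: linear_add[OF L(3)] w13 w23)
  have z4: "\<And>v. polyop [5,4,3,2,1] (\<lambda>v. v + w1 X Z v + w2 X Z v + w3 X Z v + w4 X Z v) v = 0"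
    by (rule polyop_step[OF l3 L(4) I(4) _ z3]) (auto simp: linear_add[OF L(4)] w14 w24 w34)
  have "act_weyl (Bm X Z) = (\<lambda>v. v + w1 X Z v + w2 X Z v + w3 X Z v + w4 X Z v)"
    by (rule ext) (simp add: act_weyl_Bm)
  then show ?thesis using z4 by simp
qed




lemma act_weyl_lin: "linear (act_weyl B)"
  by (rule linearI; simp add: vec_eq_iff act_weyl_def algebra_simps sum.distrib sum_distrib_left sum_subtractf)

lemma Weyl_lin_closed:
  fixes x y :: "real^'n^'n^'n^('n::finite)"
  assumes x: "x \<in> Weyl_space" and y: "y \<in> Weyl_space"
  shows "a *\<^sub>R x + b *\<^sub>R y \<in> Weyl_space"
proof -
  from x have sx: "\<And>i j k l. x$i$j$k$l = - x$j$i$k$l"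
    and bx: "\<And>i j k l. x$i$j$k$l + x$j$l$k$i + x$l$i$k$j = 0"
    and t1x: "\<And>i j. (\<Sum>k\<in>UNIV. x$i$j$k$k) = 0"
    and t2x: "\<And>j l. (\<Sum>k\<in>UNIV. x$k$j$k$l) = 0"
    and t3x: "\<And>i l. (\<Sum>k\<in>UNIV. x$i$k$k$l) = 0"
    unfolding Weyl_space_def by blast+
  from y have sy: "\<And>i j k l. y$i$j$k$l = - y$j$i$k$l"
    and by': "\<And>i j k l. y$i$j$k$l + y$j$l$k$i + y$l$i$k$j = 0"
    and t1y: "\<And>i j. (\<Sum>k\<in>UNIV. y$i$j$k$k) = 0"
    and t2y: "\<And>j l. (\<Sum>k\<in>UNIV. y$k$j$k$l) = 0"
    and t3y: "\<And>i l. (\<Sum>k\<in>UNIV. y$i$k$k$l) = 0"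
    unfolding Weyl_space_def by blast+
  let ?z = "a *\<^sub>R x + b *\<^sub>R y"
  have 1: "?z$i$j$k$l = - ?z$j$i$k$l" for i j k l
    using sx[of i j k l] sy[of i j k l] by simp
  have 2: "?z$i$j$k$l + ?z$j$l$k$i + ?z$l$i$k$j = 0" for i j k l
  proof -
    have "?z$i$j$k$l + ?z$j$l$k$i + ?z$l$i$k$j = a * (x$i$j$k$l + x$j$l$k$i + x$l$i$k$j) + b * (y$i$j$k$l + y$j$l$k$i + y$l$i$k$j)"
      by (simp add: algebra_simps)
    then show ?thesis by (simp only: bx by')
  qed
  have 3: "(\<Sum>k\<in>UNIV. ?z$i$j$k$k) = 0" for i j
    using t1x[of i j] t1y[of i j] by (simp add: sum.distrib sum_distrib_left[symmetric])
  have 4: "(\<Sum>k\<in>UNIV. ?z$k$j$k$l) = 0" for j l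
    using t2x[of j l] t2y[of j l] by (simp add: sum.distrib sum_distrib_left[symmetric])
  have 5: "(\<Sum>k\<in>UNIV. ?z$i$k$k$l) = 0" for i l
    using t3x[of i l] t3y[of i l] by (simp add: sum.distrib sum_distrib_left[symmetric])
  show ?thesis unfolding Weyl_space_def using 1 2 3 4 5 by blast
qed

lemma Weyl_subspace: "subspace (Weyl_space :: (real^'n^'n^'n^('n::finite)) set)"
  unfolding subspace_def
proof (intro conjI ballI allI)
  show "0 \<in> Weyl_space" unfolding Weyl_space_def by simp
  fix x y :: "real^'n^'n^'n^'n" assume "x \<in> Weyl_space" "y \<in> Weyl_space"
  then show "x + y \<in> Weyl_space" using Weyl_lin_closed[of x y 1 1] by simp
next
  fix c and x :: "real^'n^'n^'n^'n" assume "x \<in> Weyl_space"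
  then show "c *\<^sub>R x \<in> Weyl_space" using Weyl_lin_closed[of x x c 0] by simp
qed

lemma Weyl_inv:
  assumes "R \<in> Weyl_space" shows "act_weyl B R \<in> Weyl_space"
proof -
  from assms have skew: "\<And>i j k l. R$i$j$k$l = - R$j$i$k$l"
    and bian: "\<And>i j k l. R$i$j$k$l + R$j$l$k$i + R$l$i$k$j = 0"
    and t1: "\<And>i j. (\<Sum>k\<in>UNIV. R$i$j$k$k) = 0"
    and t2: "\<And>j l. (\<Sum>k\<in>UNIV. R$k$j$k$l) = 0"
    and t3: "\<And>i l. (\<Sum>k\<in>UNIV. R$i$k$k$l) = 0"
    unfolding Weyl_space_def by blast+
  let ?f = "act_weyl B R"
  have S: "?f$i$j$k$l = - ?f$j$i$k$l" for i j k l
  proof -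
    have s1: "\<And>m. R$j$i$m$l = - R$i$j$m$l" by (rule skew)
    have s2: "\<And>m. R$m$i$k$l = - R$i$m$k$l" by (rule skew)
    have s3: "\<And>m. R$j$m$k$l = - R$m$j$k$l" by (rule skew)
    have s4: "\<And>m. R$j$i$k$m = - R$i$j$k$m" by (rule skew)
    show ?thesis by (simp add: act_weyl_def s1 s2 s3 s4 sum_negf)
  qed
  have Bi: "?f$i$j$k$l + ?f$j$l$k$i + ?f$l$i$k$j = 0" for i j k l
  proof -
    have b1: "(\<Sum>m\<in>UNIV. B$k$m * (R$i$j$m$l + R$j$l$m$i + R$l$i$m$j)) = 0" using bian by simp
    have b2: "(\<Sum>m\<in>UNIV. B$m$i * (R$m$j$k$l + R$j$l$k$m + R$l$m$k$j)) = 0" using bian by simp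
    have b3: "(\<Sum>m\<in>UNIV. B$m$j * (R$i$m$k$l + R$m$l$k$i + R$l$i$k$m)) = 0" using bian by simp
    have b4: "(\<Sum>m\<in>UNIV. B$m$l * (R$i$j$k$m + R$j$m$k$i + R$m$i$k$j)) = 0" using bian by simp
    show ?thesis using b1 b2 b3 b4
      by (simp add: act_weyl_def distrib_left sum.distrib)
  qed
  have T1: "(\<Sum>k\<in>UNIV. ?f$i$j$k$k) = 0" for i j
  proof -
    have e: "(\<Sum>k\<in>UNIV. \<Sum>m\<in>UNIV. B$k$m * R$i$j$m$k) = (\<Sum>k\<in>UNIV. \<Sum>m\<in>UNIV. B$m$k * R$i$j$k$m)"
      by (rule sum.swap)
    have z2: "(\<Sum>k\<in>UNIV. \<Sum>m\<in>UNIV. B$m$i * R$m$j$k$k) = 0"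
      by (subst sum.swap) (simp add: sum_distrib_left[symmetric] t1)
    have z3: "(\<Sum>k\<in>UNIV. \<Sum>m\<in>UNIV. B$m$j * R$i$m$k$k) = 0"
      by (subst sum.swap) (simp add: sum_distrib_left[symmetric] t1)
    show ?thesis using e z2 z3 by (simp add: act_weyl_def sum_subtractf)
  qed
  have T2: "(\<Sum>k\<in>UNIV. ?f$k$j$k$l) = 0" for j l
  proof -
    have e: "(\<Sum>k\<in>UNIV. \<Sum>m\<in>UNIV. B$k$m * R$k$j$m$l) = (\<Sum>k\<in>UNIV. \<Sum>m\<in>UNIV. B$m$k * R$m$j$k$l)"
      by (rule sum.swap)
    have z2: "(\<Sum>k\<in>UNIV. \<Sum>m\<in>UNIV. B$m$j * R$k$m$k$l) = 0"
      by (subst sum.swap) (simp add: sum_distrib_left[symmetric] t2)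
    have z3: "(\<Sum>k\<in>UNIV. \<Sum>m\<in>UNIV. B$m$l * R$k$j$k$m) = 0"
      by (subst sum.swap) (simp add: sum_distrib_left[symmetric] t2)
    show ?thesis using e z2 z3 by (simp add: act_weyl_def sum_subtractf)
  qed
  have T3: "(\<Sum>k\<in>UNIV. ?f$i$k$k$l) = 0" for i l
  proof -
    have e: "(\<Sum>k\<in>UNIV. \<Sum>m\<in>UNIV. B$k$m * R$i$k$m$l) = (\<Sum>k\<in>UNIV. \<Sum>m\<in>UNIV. B$m$k * R$i$m$k$l)"
      by (rule sum.swap)
    have z2: "(\<Sum>k\<in>UNIV. \<Sum>m\<in>UNIV. B$m$i * R$m$k$k$l) = 0"
      by (subst sum.swap) (simp add: sum_distrib_left[symmetric] t3)
    have z3: "(\<Sum>k\<in>UNIV. \<Sum>m\<in>UNIV. B$m$l * R$i$k$k$m) = 0"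
      by (subst sum.swap) (simp add: sum_distrib_left[symmetric] t3)
    show ?thesis using e z2 z3 by (simp add: act_weyl_def sum_subtractf)
  qed
  show ?thesis unfolding Weyl_space_def using S Bi T1 T2 T3 by blast
qed

lemma act_cotton_lin: "linear (act_cotton B)"
  by (rule linearI; simp add: vec_eq_iff act_cotton_def algebra_simps sum.distrib sum_distrib_left sum_subtractf)

lemma Cotton_lin_closed:
  fixes x y :: "real^'n^'n^('n::finite)"
  assumes x: "x \<in> Cotton_space" and y: "y \<in> Cotton_space"
  shows "a *\<^sub>R x + b *\<^sub>R y \<in> Cotton_space"
proof -
  from x have sx: "\<And>i j l. x$i$j$l = - x$j$i$l"
    and bx: "\<And>i j l. x$i$j$l + x$j$l$i + x$l$i$j = 0"
    unfolding Cotton_space_def by blast+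
  from y have sy: "\<And>i j l. y$i$j$l = - y$j$i$l"
    and by': "\<And>i j l. y$i$j$l + y$j$l$i + y$l$i$j = 0"
    unfolding Cotton_space_def by blast+
  let ?z = "a *\<^sub>R x + b *\<^sub>R y"
  have 1: "?z$i$j$l = - ?z$j$i$l" for i j l
    using sx[of i j l] sy[of i j l] by simp
  have 2: "?z$i$j$l + ?z$j$l$i + ?z$l$i$j = 0" for i j l
  proof -
    have "?z$i$j$l + ?z$j$l$i + ?z$l$i$j = a * (x$i$j$l + x$j$l$i + x$l$i$j) + b * (y$i$j$l + y$j$l$i + y$l$i$j)"
      by (simp add: algebra_simps)
    then show ?thesis by (simp only: bx by')
  qed
  show ?thesis unfolding Cotton_space_def using 1 2 by blast
qed

lemma Cotton_subspace: "subspace (Cotton_space :: (real^'n^'n^('n::finite)) set)"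
  unfolding subspace_def
proof (intro conjI ballI allI)
  show "0 \<in> Cotton_space" unfolding Cotton_space_def by simp
  fix x y :: "real^'n^'n^'n" assume "x \<in> Cotton_space" "y \<in> Cotton_space"
  then show "x + y \<in> Cotton_space" using Cotton_lin_closed[of x y 1 1] by simp
next
  fix c and x :: "real^'n^'n^'n" assume "x \<in> Cotton_space"
  then show "c *\<^sub>R x \<in> Cotton_space" using Cotton_lin_closed[of x x c 0] by simp
qed

lemma Cotton_inv:
  assumes "C \<in> Cotton_space" shows "act_cotton B C \<in> Cotton_space"
proof -
  from assms have skew: "\<And>i j l. C$i$j$l = - C$j$i$l"
    and cyc: "\<And>i j l. C$i$j$l + C$j$l$i + C$l$i$j = 0"
    unfolding Cotton_space_def by blast+
  let ?f = "act_cotton B C"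
  have S: "?f$i$j$l = - ?f$j$i$l" for i j l
  proof -
    have s2: "\<And>m. C$m$i$l = - C$i$m$l" by (rule skew)
    have s3: "\<And>m. C$j$m$l = - C$m$j$l" by (rule skew)
    have s4: "\<And>m. C$j$i$m = - C$i$j$m" by (rule skew)
    show ?thesis by (simp add: act_cotton_def s2 s3 s4 sum_negf)
  qed
  have Cy: "?f$i$j$l + ?f$j$l$i + ?f$l$i$j = 0" for i j l
  proof -
    have b2: "(\<Sum>m\<in>UNIV. B$m$i * (C$m$j$l + C$j$l$m + C$l$m$j)) = 0" using cyc by simp
    have b3: "(\<Sum>m\<in>UNIV. B$m$j * (C$i$m$l + C$m$l$i + C$l$i$m)) = 0" using cyc by simp
    have b4: "(\<Sum>m\<in>UNIV. B$m$l * (C$i$j$m + C$j$m$i + C$m$i$j)) = 0" using cyc by simp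
    show ?thesis using b2 b3 b4
      by (simp add: act_cotton_def distrib_left sum.distrib)
  qed
  show ?thesis unfolding Cotton_space_def using S Cy by blast
qed




definition c1 :: "real^'n \<Rightarrow> real^'n \<Rightarrow> real^'n^'n^('n::finite) \<Rightarrow> real^'n^'n^'n" where
  "c1 X Z C = (\<chi> i j l. Z$i * (\<Sum>m\<in>UNIV. X$m * C$m$j$l))"
definition c2 :: "real^'n \<Rightarrow> real^'n \<Rightarrow> real^'n^'n^('n::finite) \<Rightarrow> real^'n^'n^'n" where
  "c2 X Z C = (\<chi> i j l. Z$j * (\<Sum>m\<in>UNIV. X$m * C$i$m$l))"
definition c3 :: "real^'n \<Rightarrow> real^'n \<Rightarrow> real^'n^'n^('n::finite) \<Rightarrow> real^'n^'n^'n" where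
  "c3 X Z C = (\<chi> i j l. Z$l * (\<Sum>m\<in>UNIV. X$m * C$i$j$m))"

lemmas cdefs = c1_def c2_def c3_def

lemma act_cotton_Bm: "act_cotton (Bm X Z) C = 3 *\<^sub>R C + c1 X Z C + c2 X Z C + c3 X Z C"
  by (simp add: vec_eq_iff act_cotton_def Bm_def cdefs algebra_simps
      sum_subtractf sum.distrib sum_distrib_left sum_negf if_distrib[of "\<lambda>x. x * _"] cong: if_cong)

lemma c_lin: "linear (c1 X Z)" "linear (c2 X Z)" "linear (c3 X Z)"
  by (rule linearI; simp add: vec_eq_iff cdefs algebra_simps sum.distrib sum_distrib_left)+

lemma c_idem: assumes "pair Z X = 1"
  shows "c1 X Z (c1 X Z R) = c1 X Z R" "c2 X Z (c2 X Z R) = c2 X Z R"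
    "c3 X Z (c3 X Z R) = c3 X Z R"
  using assms by (simp_all add: vec_eq_iff cdefs px pz right_diff_distrib sum_subtractf pair_sym[of X Z])

lemma c12: "c1 X Z (c2 X Z R) = c2 X Z (c1 X Z R)"
  apply (simp add: vec_eq_iff cdefs sum_distrib_left)
  apply (subst sum.swap) apply (simp add: mult_ac)
  done
lemma c13: "c1 X Z (c3 X Z R) = c3 X Z (c1 X Z R)"
  apply (simp add: vec_eq_iff cdefs sum_distrib_left)
  apply (subst sum.swap) apply (simp add: mult_ac)
  done
lemma c23: "c2 X Z (c3 X Z R) = c3 X Z (c2 X Z R)"
  apply (simp add: vec_eq_iff cdefs sum_distrib_left)
  apply (subst sum.swap) apply (simp add: mult_ac)
  done

lemma lin_3: "linear (\<lambda>v::'a::real_vector. 3 *\<^sub>R v)"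
  by (rule linearI) (auto simp: algebra_simps)

lemma cotton_poly:
  assumes p: "pair Z X = 1"
  shows "polyop [6,5,4,3] (act_cotton (Bm X Z)) R = 0"
proof -
  note L = c_lin[of X Z] and I = c_idem[OF p]
  have l1: "linear (\<lambda>v. 3 *\<^sub>R v + c1 X Z v)" by (rule linear_compose_add[OF lin_3 L(1)])
  have l2: "linear (\<lambda>v. 3 *\<^sub>R v + c1 X Z v + c2 X Z v)" by (rule linear_compose_add[OF l1 L(2)])
  have z0: "\<And>v. polyop [3] (\<lambda>v. 3 *\<^sub>R v) v = 0" by simp
  have z1: "\<And>v. polyop [4,3] (\<lambda>v. 3 *\<^sub>R v + c1 X Z v) v = 0"
    by (rule polyop_step[OF lin_3 L(1) I(1) _ z0]) (auto simp: linear_scale[OF L(1)])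
  have z2: "\<And>v. polyop [5,4,3] (\<lambda>v. 3 *\<^sub>R v + c1 X Z v + c2 X Z v) v = 0"
    by (rule polyop_step[OF l1 L(2) I(2) _ z1]) (auto simp: linear_add[OF L(2)] linear_scale[OF L(2)] c12)
  have z3: "\<And>v. polyop [6,5,4,3] (\<lambda>v. 3 *\<^sub>R v + c1 X Z v + c2 X Z v + c3 X Z v) v = 0"
    by (rule polyop_step[OF l2 L(3) I(3) _ z2]) (auto simp: linear_add[OF L(3)] linear_scale[OF L(3)] c13 c23)
  have "act_cotton (Bm X Z) = (\<lambda>v. 3 *\<^sub>R v + c1 X Z v + c2 X Z v + c3 X Z v)"
    by (rule ext) (simp add: act_cotton_Bm)
  then show ?thesis using z3 by simp
qed




lemma tensor_part:
  assumes S: "subspace S" and inv: "\<And>v. v \<in> S \<Longrightarrow> f v \<in> S" and lf: "linear f"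
    and d: "distinct L" and z: "\<And>v. polyop L f v = 0" and pos: "\<forall>m\<in>set L. m > 0"
  shows "diagonalizable_on S f \<and> W_ss S f = {0} \<and> W_st S f = {0}"
proof (intro conjI)
  show "diagonalizable_on S f" unfolding diagonalizable_on_def
    using polyop_diag[OF d lf S inv] z by blast
  have k: "v = 0" if "f v = c *\<^sub>R v" "c \<le> 0" for v c
    using polyop_noeig[OF lf z that(1)] pos that(2) by fastforce
  have f0: "f 0 = 0" using linear_0[OF lf] .
  have k2: "v = 0" if "f v = c *\<^sub>R v" "c < 0" for v c using k[OF that(1)] that(2) by simp
  have "{v\<in>S. \<exists>c<0. f v = c *\<^sub>R v} = {0}"
    using k2 subspace_0[OF S] f0 by (auto intro!: exI[of _ "-1"])
  then show "W_ss S f = {0}" unfolding W_ss_def by simp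
  have "{v\<in>S. \<exists>c\<le>0. f v = c *\<^sub>R v} = {0}"
    using k subspace_0[OF S] f0 by (auto intro!: exI[of _ "-1"])
  then show "W_st S f = {0}" unfolding W_st_def by simp
qed

theorem lemma3p2:
  fixes Z :: "real^'n::finite"
  assumes n2: "CARD('n) \<ge> 2"
    and Z0: "Z \<noteq> 0"
  shows "Cset Z = {0} \<and> Cset Z \<subseteq> Fset Z \<and> Fset Z = {X. pair Z X = 0}
    \<and> Tset Z = {X. pair Z X = 1}
    \<and> (\<forall>X\<in>Tset Z.
          diagonalizable_on UNIV (ad_m1 (brk (g1 Z) (gm1 X)))
        \<and> (\<forall>c v. v \<noteq> 0 \<and> ad_m1 (brk (g1 Z) (gm1 X)) v = c *\<^sub>R v \<longrightarrow> c \<le> 0)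
        \<and> {v. ad_m1 (brk (g1 Z) (gm1 X)) v = 0} = Cset Z)
    \<and> (if CARD('n) > 2 then
          (\<forall>X\<in>Tset Z.
              diagonalizable_on Weyl_space (act_weyl (ad_m1_mat (brk (g1 Z) (gm1 X))))
            \<and> W_ss Weyl_space (act_weyl (ad_m1_mat (brk (g1 Z) (gm1 X)))) = {0})
        \<and> (\<Inter>X\<in>Tset Z. W_st Weyl_space (act_weyl (ad_m1_mat (brk (g1 Z) (gm1 X))))) = {0}
       else
          (\<forall>X\<in>Tset Z.
              diagonalizable_on Cotton_space (act_cotton (ad_m1_mat (brk (g1 Z) (gm1 X))))
            \<and> W_ss Cotton_space (act_cotton (ad_m1_mat (brk (g1 Z) (gm1 X)))) = {0})
        \<and> (\<Inter>X\<in>Tset Z. W_st Cotton_space (act_cotton (ad_m1_mat (brk (g1 Z) (gm1 X))))) = {0})"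
proof -
  have Cs: "Cset Z = {0}" by (rule Cset_eq[OF Z0])
  have Fs: "Fset Z = {X. pair Z X = 0}" by (rule Fset_eq)
  have Ts: "Tset Z = {X. pair Z X = 1}" by (rule Tset_eq[OF Z0])
  obtain b where b: "Z $ b \<noteq> 0" using Z0 by (auto simp: vec_eq_iff)
  have "pair Z (axis b (1 / Z$b)) = 1"
    using b by (simp add: pair_def axis_def if_distrib[of "\<lambda>x. _ * x"] cong: if_cong)
  then have ne: "Tset Z \<noteq> {}" using Ts by auto
  have W: "diagonalizable_on Weyl_space (act_weyl (ad_m1_mat (brk (g1 Z) (gm1 X))))
      \<and> W_ss Weyl_space (act_weyl (ad_m1_mat (brk (g1 Z) (gm1 X)))) = {0}
      \<and> W_st Weyl_space (act_weyl (ad_m1_mat (brk (g1 Z) (gm1 X)))) = {0}" if "X \<in> Tset Z" for X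
  proof -
    have p: "pair Z X = 1" using that Ts by auto
    show ?thesis unfolding ad_mat_Bm[OF p]
      by (rule tensor_part[OF Weyl_subspace Weyl_inv act_weyl_lin _ weyl_poly[OF p]]) auto
  qed
  have C: "diagonalizable_on Cotton_space (act_cotton (ad_m1_mat (brk (g1 Z) (gm1 X))))
      \<and> W_ss Cotton_space (act_cotton (ad_m1_mat (brk (g1 Z) (gm1 X)))) = {0}
      \<and> W_st Cotton_space (act_cotton (ad_m1_mat (brk (g1 Z) (gm1 X)))) = {0}" if "X \<in> Tset Z" for X
  proof -
    have p: "pair Z X = 1" using that Ts by auto
    show ?thesis unfolding ad_mat_Bm[OF p]
      by (rule tensor_part[OF Cotton_subspace Cotton_inv act_cotton_lin _ cotton_poly[OF p]]) auto
  qed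
  have A: "\<forall>X\<in>Tset Z.
          diagonalizable_on UNIV (ad_m1 (brk (g1 Z) (gm1 X)))
        \<and> (\<forall>c v. v \<noteq> 0 \<and> ad_m1 (brk (g1 Z) (gm1 X)) v = c *\<^sub>R v \<longrightarrow> c \<le> 0)
        \<and> {v. ad_m1 (brk (g1 Z) (gm1 X)) v = 0} = Cset Z"
    using ad_part[OF Z0] Ts by auto
  have WI: "(\<Inter>X\<in>Tset Z. W_st Weyl_space (act_weyl (ad_m1_mat (brk (g1 Z) (gm1 X))))) = {0}"
    using W ne by auto
  have CI: "(\<Inter>X\<in>Tset Z. W_st Cotton_space (act_cotton (ad_m1_mat (brk (g1 Z) (gm1 X))))) = {0}"
    using C ne by auto
  have p0: "pair Z 0 = 0" by (simp add: pair_def)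
  show ?thesis using Cs Fs Ts A W C WI CI p0 by auto
qed


end
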